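(* Let $q\ge1$ be an integer and let $X$ be a random variable such that $qX$ is integer-valued almost surely, with $\mathbb E|X|<\infty$. Then \[ \mathbb E\lfloor X\rfloor=\mathbb E X-\frac12+\frac1{2q}+\sum_{j=1}^{q-1}\frac{1}{q(1-e^{-2\pi\mathrm i j/q})}\varphi_X(2\pi j). \] If $q$ is even, then \[ \mathbb E\langle X\rangle=\mathbb E X+\frac1{2q}+\sum_{j=1}^{q-1}\frac{(-1)^j}{q(1-e^{-2\pi\mathrm i j/q})}\varphi_X(2\pi j). \] If $q$ is odd, then \[ \mathbb E\langle X\rangle=\mathbb E X+\sum_{j=1}^{q-1}\frac{(-1)^j}{q(e^{\pi\mathrm i j/q}-e^{-\pi\mathrm i j/q})}\varphi_X(2\pi j). \]
   Context: For a random variable $Y$, $\varphi_Y(t):=\mathbb E\, e^{\mathrm i tY}$ is its characteristic function. $\lfloor x\rfloor$ is $x$ rounded down to an integer, and $\langle x\rangle:=\lfloor x+\tfrac12\rfloor$ is $x$ rounded to the nearest integer, with ties broken upward. *)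

theory Defs
  imports "HOL-Probability.Probability"
begin

definition round_nearest :: "real \<Rightarrow> int" where
  "round_nearest x = \<lfloor>x + 1/2\<rfloor>"

end

theory Submission
  imports Defs
begin

definition ee :: "real \<Rightarrow> complex" where
  "ee t = exp (2 * pi * \<i> * complex_of_real t)"

lemma ee_add: "ee (a + b) = ee a * ee b"
  unfolding ee_def by (simp add: distrib_left exp_add)

lemma ee_int: "ee (of_int k) = 1"
  unfolding ee_def using exp_2pi_1_int[of k] by (simp add: mult_ac)

lemma ee_nat: "ee (of_nat k) = 1"
  using ee_int[of "int k"] by simp

lemma ee_neg: "ee (- a) = 1 / ee a"
  unfolding ee_def by (simp add: exp_minus' )

lemma ee_nonzero: "ee a \<noteq> 0"
  unfolding ee_def by simp

lemma ee_pow: "ee a ^ n = ee (of_nat n * a)"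
  unfolding ee_def by (simp add: exp_of_nat_mult[symmetric] mult_ac)

lemma ee_eq_1: "ee a = 1 \<longleftrightarrow> a \<in> \<int>"
proof -
  have "ee a = 1 \<longleftrightarrow> (\<exists>n::int. 2 * pi * a = of_int (2 * n) * pi)"
    unfolding ee_def exp_eq_1 by simp
  also have "\<dots> \<longleftrightarrow> (\<exists>n::int. a = of_int n)" by auto
  also have "\<dots> \<longleftrightarrow> a \<in> \<int>" by (auto elim: Ints_cases)
  finally show ?thesis .
qed

lemma ee_frac_neq1:
  assumes "0 < r" "r < q"
  shows "ee (real r / real q) \<noteq> 1"
proof
  assume "ee (real r / real q) = 1"
  then obtain n :: int where n: "real r / real q = of_int n" by (auto simp: ee_eq_1 elim: Ints_cases)
  have "0 < real r / real q" "real r / real q < 1" using assms by auto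
  with n show False by simp
qed


lemma sum_split0:
  assumes "q \<ge> (1::nat)"
  shows "(\<Sum>j<q. f j) = f 0 + (\<Sum>j=1..q-1. f j)"
proof -
  have "{..<q} = insert 0 {1..q-1}" using assms by auto
  then show ?thesis by simp
qed

lemma geo_sum:
  assumes "0 < r" "r < q"
  shows "(\<Sum>j=1..q-1. ee (real j * real r / real q)) = -1"
proof -
  define w where "w = ee (real r / real q)"
  have w1: "w \<noteq> 1" unfolding w_def using ee_frac_neq1 assms by blast
  have wq: "w ^ q = 1" unfolding w_def ee_pow using assms ee_nat[of r] by simp
  have "(\<Sum>j<q. w ^ j) = 0" using sum_gp_strict[of w q] w1 wq by simp
  moreover have "(\<Sum>j<q. w ^ j) = 1 + (\<Sum>j=1..q-1. w ^ j)"
    using sum_split0[of q "\<lambda>j. w ^ j"] assms by simp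
  moreover have "(\<Sum>j=1..q-1. ee (real j * real r / real q)) = (\<Sum>j=1..q-1. w ^ j)"
    unfolding w_def ee_pow by (simp add: mult_ac)
  ultimately show ?thesis by (simp add: add_eq_0_iff)
qed

lemma aux1:
  fixes a :: complex assumes a0: "a \<noteq> 0" and a1: "a \<noteq> 1"
  shows "1 / (1 - 1 / a) + 1 / (1 - a) = 1"
proof -
  have c: "a - 1 \<noteq> 0" using a1 by simp
  have d: "1 - 1 / a = (a - 1) / a" using a0 by (simp add: diff_divide_distrib)
  have "1 / (1 - 1 / a) = a / (a - 1)" unfolding d by simp
  moreover have "1 / (1 - a) = - (1 / (a - 1))"
    by (metis divide_minus_right minus_diff_eq)
  ultimately have "1 / (1 - 1 / a) + 1 / (1 - a) = a / (a - 1) - 1 / (a - 1)"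
    by simp
  also have "\<dots> = (a - 1) / (a - 1)" by (simp only: diff_divide_distrib)
  finally have "1 / (1 - 1 / a) + 1 / (1 - a) = (a - 1) / (a - 1)" .
  then show ?thesis using c by simp
qed
lemma aux2:
  fixes b X :: complex assumes b0: "b \<noteq> 0" and b1: "b \<noteq> 1"
  shows "X * b / (1 - 1 / b) - X / (1 - 1 / b) = X * b"
proof -
  have c: "b - 1 \<noteq> 0" using b1 by simp
  have d: "1 - 1 / b = (b - 1) / b" using b0 by (simp add: diff_divide_distrib)
  have "X * b / (1 - 1 / b) - X / (1 - 1 / b) = (X * b - X) / (1 - 1 / b)"
    by (simp add: diff_divide_distrib)
  also have "\<dots> = (X * (b - 1)) * b / (b - 1)" unfolding d by (simp add: algebra_simps)
  also have "\<dots> = X * b" using c by simp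
  finally show ?thesis .
qed

lemma pair_sum:
  assumes "0 < j" "j < q"
  shows "1 / (1 - ee (- (real j / real q))) + 1 / (1 - ee (- (real (q - j) / real q))) = 1"
proof -
  define a where "a = ee (real j / real q)"
  have a1: "a \<noteq> 1" unfolding a_def using ee_frac_neq1 assms by blast
  have a0: "a \<noteq> 0" unfolding a_def by (rule ee_nonzero)
  have "- (real (q - j) / real q) = - 1 + real j / real q" using assms
    by (simp add: of_nat_diff field_simps)
  then have e2: "ee (- (real (q - j) / real q)) = a"
    unfolding a_def using ee_add[of "real j / real q" "of_int (-1)"] ee_int[of "-1"] by (simp add: add.commute)
  have e1: "ee (- (real j / real q)) = 1 / a" unfolding a_def by (rule ee_neg)
  have "1 - a \<noteq> 0" "a - 1 \<noteq> 0" using a1 by auto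
  have h: "a * 2 \<noteq> 1 + a * a"
  proof
    assume h2: "a * 2 = 1 + a * a"
    have "(a - 1) * (a - 1) = 1 + a * a - a * 2" by (simp add: algebra_simps)
    with h2 have "(a - 1) * (a - 1) = 0" by simp
    with a1 show False by simp
  qed
  show ?thesis unfolding e1 e2 by (rule aux1[OF a0 a1])
qed

lemma S0:
  assumes "q \<ge> (1::nat)"
  shows "(\<Sum>j=1..q-1. 1 / (1 - ee (- (real j / real q)))) = (real q - 1) / 2"
proof -
  define f where "f j = 1 / (1 - ee (- (real j / real q)))" for j
  have "(\<Sum>j=1..q-1. f j) = (\<Sum>j=1..q-1. f (q - j))"
    by (rule sum.reindex_bij_witness[of _ "\<lambda>j. q - j" "\<lambda>j. q - j"]) auto
  then have "2 * (\<Sum>j=1..q-1. f j) = (\<Sum>j=1..q-1. f j + f (q - j))"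
    by (simp add: sum.distrib)
  also have "\<dots> = (\<Sum>j=1..q-1. 1)"
    by (rule sum.cong) (auto simp: f_def intro!: pair_sum)
  also have "\<dots> = of_nat (q - 1)" by simp
  finally have "(\<Sum>j=1..q-1. f j) = of_nat (q - 1) / 2" by (simp add: eq_divide_eq mult.commute)
  then show ?thesis using assms by (simp add: f_def of_nat_diff)
qed

definition SS :: "nat \<Rightarrow> nat \<Rightarrow> complex" where
  "SS q r = (\<Sum>j=1..q-1. ee (real j * real r / real q) / (1 - ee (- (real j / real q))))"

lemma SS_step:
  assumes "Suc r < q"
  shows "SS q (Suc r) = SS q r - 1"
proof -
  have "SS q (Suc r) - SS q r = (\<Sum>j=1..q-1. ee (real j * real (Suc r) / real q))"
    unfolding SS_def sum_subtractf[symmetric]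
  proof (rule sum.cong)
    fix j assume j: "j \<in> {1..q-1}"
    define b where "b = ee (real j / real q)"
    have "0 < j" "j < q" using j by auto
    then have b1: "b \<noteq> 1" unfolding b_def using ee_frac_neq1[of j q] by auto
    have b0: "b \<noteq> 0" unfolding b_def by (rule ee_nonzero)
    have e1: "ee (- (real j / real q)) = 1 / b" unfolding b_def by (rule ee_neg)
    have "real j * real (Suc r) / real q = real j * real r / real q + real j / real q"
      by (simp add: add_divide_distrib algebra_simps)
    then have e2: "ee (real j * real (Suc r) / real q) = ee (real j * real r / real q) * b"
      unfolding b_def by (simp add: ee_add)
    have "1 - b \<noteq> 0" using b1 by auto
    show "ee (real j * real (Suc r) / real q) / (1 - ee (- (real j / real q))) -
          ee (real j * real r / real q) / (1 - ee (- (real j / real q))) =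
          ee (real j * real (Suc r) / real q)"
      unfolding e1 e2 by (rule aux2[OF b0 b1])
  qed simp
  also have "\<dots> = -1" by (rule geo_sum) (use assms in auto)
  finally show ?thesis by (simp add: algebra_simps)
qed

lemma SS_val:
  assumes "q \<ge> 1" "r < q"
  shows "SS q r = (real q - 1) / 2 - real r"
  using assms
proof (induction r)
  case 0
  then show ?case using S0[of q] by (simp add: SS_def ee_def)
next
  case (Suc r)
  then show ?case using SS_step[of r q] by simp
qed


lemma floor_pt:
  assumes q1: "q \<ge> (1::nat)" and yi: "real q * y \<in> \<int>"
  shows "complex_of_real (real_of_int \<lfloor>y\<rfloor>) = complex_of_real y + (1 / (2 * of_nat q) - 1/2)
    + (\<Sum>j=1..q-1. (1 / (of_nat q * (1 - ee (- (real j / real q))))) * ee (real j * y))"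
proof -
  obtain n :: int where n: "real q * y = of_int n" using yi by (auto elim: Ints_cases)
  define k where "k = \<lfloor>y\<rfloor>"
  define ri where "ri = n - int q * k"
  have qpos: "real q > 0" using q1 by simp
  have k1: "of_int k \<le> y" "y < of_int k + 1" unfolding k_def by linarith+
  have "real q * of_int k \<le> real q * y" using k1 qpos by (intro mult_left_mono) auto
  then have "real_of_int (int q * k) \<le> real_of_int n" using n by simp
  then have ri0: "0 \<le> ri" unfolding ri_def by linarith
  have "real q * y < real q * (of_int k + 1)" using k1 qpos by (intro mult_strict_left_mono) auto
  then have "real_of_int n < real_of_int (int q * k + int q)" using n by (simp add: algebra_simps)
  then have "n < int q * k + int q" by linarith
  then have riq: "ri < int q" unfolding ri_def by linarith
  define r where "r = nat ri"
  have rq: "r < q" unfolding r_def using riq ri0 by linarith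
  have rr: "real r = real_of_int ri" unfolding r_def using ri0 by simp
  have yk: "y = of_int k + real r / real q"
    unfolding rr ri_def using qpos n by (simp add: field_simps)
  have ee_j: "ee (real j * y) = ee (real j * real r / real q)" for j
  proof -
    have "real j * y = of_int (int j * k) + real j * real r / real q"
      unfolding yk by (simp add: algebra_simps)
    then show ?thesis using ee_int[of "int j * k"] by (simp add: ee_add del: of_int_mult)
  qed
  have "(\<Sum>j=1..q-1. (1 / (of_nat q * (1 - ee (- (real j / real q))))) * ee (real j * y))
      = (\<Sum>j=1..q-1. ee (real j * real r / real q) / (1 - ee (- (real j / real q))) / of_nat q)"
    by (rule sum.cong) (auto simp: ee_j)
  also have "\<dots> = SS q r / of_nat q" unfolding SS_def by (simp add: sum_divide_distrib)
  also have "\<dots> = complex_of_real (((real q - 1) / 2 - real r) / real q)"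
    using SS_val[OF q1 rq] by simp
  finally have sm: "(\<Sum>j=1..q-1. (1 / (of_nat q * (1 - ee (- (real j / real q))))) * ee (real j * y))
      = complex_of_real (((real q - 1) / 2 - real r) / real q)" .
  have "real_of_int \<lfloor>y\<rfloor> = y + (1 / (2 * real q) - 1/2) + ((real q - 1) / 2 - real r) / real q"
    unfolding k_def[symmetric] using qpos by (subst yk) (simp add: field_simps)
  then have "complex_of_real (real_of_int \<lfloor>y\<rfloor>) = complex_of_real (y + (1 / (2 * real q) - 1/2) + ((real q - 1) / 2 - real r) / real q)"
    by simp
  also have "\<dots> = complex_of_real y + (1 / (2 * of_nat q) - 1/2) + complex_of_real (((real q - 1) / 2 - real r) / real q)"
    by simp
  finally show ?thesis unfolding sm .
qed


lemma ee_half_nat: "ee (real j / 2) = (-1) ^ j"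
proof -
  have "ee (1/2) = -1" unfolding ee_def by (simp add: mult_ac)
  then have "ee (1/2) ^ j = (-1) ^ j" by simp
  then show ?thesis unfolding ee_pow by simp
qed

lemma round_even_pt:
  assumes q1: "q \<ge> (1::nat)" and ev: "even q" and xi: "real q * x \<in> \<int>"
  shows "complex_of_real (real_of_int (round_nearest x)) = complex_of_real x + 1 / (2 * of_nat q)
    + (\<Sum>j=1..q-1. ((-1) ^ j / (of_nat q * (1 - ee (- (real j / real q))))) * ee (real j * x))"
proof -
  obtain t where t: "q = 2 * t" using ev by auto
  have "real q * (x + 1/2) = real q * x + of_nat t" unfolding t by (simp add: algebra_simps)
  then have yi: "real q * (x + 1/2) \<in> \<int>" using xi by simp
  have ej: "ee (real j * (x + 1/2)) = (-1) ^ j * ee (real j * x)" for j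
  proof -
    have "real j * (x + 1/2) = real j * x + real j / 2" by (simp add: algebra_simps)
    then show ?thesis by (simp add: ee_add ee_half_nat)
  qed
  have "complex_of_real (real_of_int (round_nearest x)) = complex_of_real (x + 1/2) + (1 / (2 * of_nat q) - 1/2)
    + (\<Sum>j=1..q-1. (1 / (of_nat q * (1 - ee (- (real j / real q))))) * ee (real j * (x + 1/2)))"
    unfolding round_nearest_def by (rule floor_pt[OF q1 yi])
  also have "(\<Sum>j=1..q-1. (1 / (of_nat q * (1 - ee (- (real j / real q))))) * ee (real j * (x + 1/2)))
     = (\<Sum>j=1..q-1. ((-1) ^ j / (of_nat q * (1 - ee (- (real j / real q))))) * ee (real j * x))"
    by (rule sum.cong) (simp_all add: ej)
  also have "complex_of_real (x + 1/2) + (1 / (2 * of_nat q) - 1/2) = complex_of_real x + 1 / (2 * of_nat q)"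
    by simp
  finally show ?thesis .
qed

lemma round_odd_floor:
  assumes q1: "q \<ge> (1::nat)" and od: "odd q" and xi: "real q * x \<in> \<int>"
  shows "round_nearest x = \<lfloor>x + (real q - 1) / (2 * real q)\<rfloor>"
proof -
  obtain n :: int where n: "real q * x = of_int n" using xi by (auto elim: Ints_cases)
  obtain t where t: "q = 2 * t + 1" using od by (metis oddE)
  define m where "m = \<lfloor>x + (real q - 1) / (2 * real q)\<rfloor>"
  have qpos: "real q > 0" using q1 by simp
  have m1: "of_int m \<le> x + (real q - 1) / (2 * real q)" "x + (real q - 1) / (2 * real q) < of_int m + 1"
    unfolding m_def by linarith+
  have "2 * real q * (x + (real q - 1) / (2 * real q)) = 2 * (real q * x) + (real q - 1)"
    using qpos by (simp add: field_simps)
  also have "\<dots> = of_int (2 * n + 2 * int t)" unfolding n by (simp add: t algebra_simps)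
  finally have ex: "2 * real q * (x + (real q - 1) / (2 * real q)) = of_int (2 * n + 2 * int t)" .
  have "2 * real q * of_int m \<le> 2 * real q * (x + (real q - 1) / (2 * real q))"
    using m1 qpos by (intro mult_left_mono) auto
  have "2 * real q * (x + (real q - 1) / (2 * real q)) < 2 * real q * (of_int m + 1)"
    using m1 qpos by (intro mult_strict_left_mono) auto
  then have "real_of_int (2 * n + 2 * int t) < real_of_int (2 * (int q * m + int q))"
    unfolding ex by (simp add: algebra_simps)
  then have a2: "2 * n + 2 * int t < 2 * (int q * m + int q)" by linarith
  then have "n + int t < int q * m + int q" by simp
  then have a3: "n + int t + 1 \<le> int q * m + int q" by linarith
  have rq: "real q = 2 * real t + 1" unfolding t by simp
  have "x + 1/2 = (2 * (real q * x) + real q) / (2 * real q)"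
    using qpos by (simp add: field_simps)
  also have "\<dots> = (of_int (2 * n + 2 * int t + 1)) / (2 * real q)"
    unfolding n by (simp add: rq)
  finally have x2: "x + 1/2 = (of_int (2 * n + 2 * int t + 1)) / (2 * real q)" .
  have h: "(real q - 1) / (2 * real q) \<le> 1/2" using qpos by (simp add: divide_le_eq)
  have "of_int m \<le> x + 1/2" using m1(1) h by linarith
  moreover have "x + 1/2 < of_int m + 1"
  proof -
    have "2 * n + 2 * int t + 1 < 2 * (int q * m + int q)"
      using a3 by (simp add: algebra_simps)
    then have "real_of_int (2 * n + 2 * int t + 1) < real_of_int (2 * (int q * m + int q))"
      by (simp only: of_int_less_iff)
    then have lt: "real_of_int (2 * n + 2 * int t + 1) < (of_int m + 1) * (2 * real q)"
      by (simp add: algebra_simps)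
    have "real_of_int (2 * n + 2 * int t + 1) / (2 * real q) < of_int m + 1"
      using lt qpos by (subst divide_less_eq) simp
    then show ?thesis unfolding x2 .
  qed
  ultimately show ?thesis unfolding round_nearest_def m_def[symmetric] floor_eq_iff by simp
qed

lemma aux3:
  fixes u E s Q :: complex assumes u0: "u \<noteq> 0"
  shows "(1 / (Q * (1 - 1 / u ^ 2))) * (E * s * (1 / u)) = (s / (Q * (u - 1 / u))) * E"
proof -
  have "u * (1 - 1 / u ^ 2) = u - 1 / u" using u0 by (simp add: algebra_simps power2_eq_square)
  then have "Q * (1 - 1 / u ^ 2) * u = Q * (u - 1 / u)" by (simp add: mult_ac)
  then have "(1 / (Q * (1 - 1 / u ^ 2))) * (E * s * (1 / u)) = E * s / (Q * (1 - 1 / u ^ 2) * u)"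
    by simp
  also have "\<dots> = (s / (Q * (u - 1 / u))) * E" unfolding \<open>Q * (1 - 1 / u ^ 2) * u = Q * (u - 1 / u)\<close>
    by simp
  finally show ?thesis .
qed

lemma round_odd_pt:
  assumes q1: "q \<ge> (1::nat)" and od: "odd q" and xi: "real q * x \<in> \<int>"
  shows "complex_of_real (real_of_int (round_nearest x)) = complex_of_real x + 0
    + (\<Sum>j=1..q-1. ((-1) ^ j / (of_nat q * (ee (real j / (2 * real q)) - ee (- (real j / (2 * real q)))))) * ee (real j * x))"
proof -
  obtain t where t: "q = 2 * t + 1" using od by (metis oddE)
  have qpos: "real q > 0" using q1 by simp
  define y where "y = x + (real q - 1) / (2 * real q)"
  have "real q * y = real q * x + of_nat t" unfolding y_def using qpos unfolding t by (simp add: field_simps)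
  then have yi: "real q * y \<in> \<int>" using xi by simp
  have ej: "ee (real j * y) = ee (real j * x) * (-1) ^ j * (1 / ee (real j / (2 * real q)))" for j
  proof -
    have "real j * y = real j * x + (real j / 2 + - (real j / (2 * real q)))"
      unfolding y_def using qpos by (simp add: field_simps)
    then have "ee (real j * y) = ee (real j * x) * (ee (real j / 2) * ee (- (real j / (2 * real q))))"
      by (simp only: ee_add)
    then show ?thesis by (simp only: ee_half_nat ee_neg mult.assoc)
  qed
  have eq2: "ee (- (real j / real q)) = 1 / ee (real j / (2 * real q)) ^ 2" for j
  proof -
    have "ee (real j / (2 * real q)) ^ 2 = ee (real j / real q)" unfolding ee_pow by simp
    then show ?thesis by (simp add: ee_neg del: minus_divide_left)
  qed
  have "complex_of_real (real_of_int (round_nearest x)) = complex_of_real y + (1 / (2 * of_nat q) - 1/2)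
    + (\<Sum>j=1..q-1. (1 / (of_nat q * (1 - ee (- (real j / real q))))) * ee (real j * y))"
    unfolding round_odd_floor[OF q1 od xi] y_def[symmetric] by (rule floor_pt[OF q1 yi])
  also have "(\<Sum>j=1..q-1. (1 / (of_nat q * (1 - ee (- (real j / real q))))) * ee (real j * y))
     = (\<Sum>j=1..q-1. ((-1) ^ j / (of_nat q * (ee (real j / (2 * real q)) - ee (- (real j / (2 * real q)))))) * ee (real j * x))"
  proof (rule sum.cong)
    fix j assume "j \<in> {1..q-1}"
    show "(1 / (of_nat q * (1 - ee (- (real j / real q))))) * ee (real j * y) =
      ((-1) ^ j / (of_nat q * (ee (real j / (2 * real q)) - ee (- (real j / (2 * real q)))))) * ee (real j * x)"
      unfolding ej eq2 ee_neg[of "real j / (2 * real q)"] by (rule aux3[OF ee_nonzero])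
  qed simp
  also have "complex_of_real y + (1 / (2 * of_nat q) - 1/2) = complex_of_real x + 0"
  proof -
    have "y + (1 / (2 * real q) - 1/2) = x" unfolding y_def using qpos by (simp add: field_simps)
    then have "complex_of_real (y + (1 / (2 * real q) - 1/2)) = complex_of_real x" by simp
    then show ?thesis by simp
  qed
  finally show ?thesis .
qed

lemma integ_step:
  fixes M :: "'a measure" and X F :: "'a \<Rightarrow> real"
  assumes P: "prob_space M" and Xm: "X \<in> borel_measurable M" and Xi: "integrable M X"
    and Fm: "F \<in> borel_measurable M" and J: "finite J"
    and AE: "AE \<omega> in M. complex_of_real (F \<omega>) = complex_of_real (X \<omega>) + c + (\<Sum>j\<in>J. a j * ee (real j * X \<omega>))"
  shows "complex_of_real (\<integral>\<omega>. F \<omega> \<partial>M) = complex_of_real (\<integral>\<omega>. X \<omega> \<partial>M) + c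
     + (\<Sum>j\<in>J. a j * char (distr M borel X) (2 * pi * real j))"
proof -
  interpret prob_space M by (rule P)
  have eeI: "ee t = exp (\<i> * complex_of_real (2 * pi * t))" for t unfolding ee_def by (simp add: mult_ac)
  have ii: "integrable M (\<lambda>\<omega>. ee (real j * X \<omega>))" for j
    unfolding eeI by (rule integrable_iexp) (use Xm in auto)
  have ch: "char (distr M borel X) (2 * pi * real j) = (\<integral>\<omega>. ee (real j * X \<omega>) \<partial>M)" for j
  proof -
    have "char (distr M borel X) (2 * pi * real j) = (\<integral>\<omega>. iexp (2 * pi * real j * X \<omega>) \<partial>M)"
      unfolding char_def using Xm by (subst integral_distr) auto
    also have "\<dots> = (\<integral>\<omega>. ee (real j * X \<omega>) \<partial>M)" unfolding eeI by (simp add: mult_ac)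
    finally show ?thesis .
  qed
  define G where "G \<omega> = complex_of_real (X \<omega>) + c + (\<Sum>j\<in>J. a j * ee (real j * X \<omega>))" for \<omega>
  have i1: "integrable M (\<lambda>\<omega>. complex_of_real (X \<omega>))" using Xi by (rule integrable_of_real)
  have i2: "integrable M (\<lambda>\<omega>. c)" by simp
  have i3: "integrable M (\<lambda>\<omega>. (\<Sum>j\<in>J. a j * ee (real j * X \<omega>)))"
    by (intro Bochner_Integration.integrable_sum Bochner_Integration.integrable_mult_right ii)
  have Gi: "integrable M G" unfolding G_def by (intro Bochner_Integration.integrable_add i1 i2 i3)
  have "complex_of_real (\<integral>\<omega>. F \<omega> \<partial>M) = (\<integral>\<omega>. complex_of_real (F \<omega>) \<partial>M)" by simp
  also have "\<dots> = integral\<^sup>L M G"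
    by (rule integral_cong_AE) (use Fm borel_measurable_integrable[OF Gi] AE in \<open>auto simp: G_def\<close>)
  also have "\<dots> = complex_of_real (\<integral>\<omega>. X \<omega> \<partial>M) + c + (\<Sum>j\<in>J. a j * (\<integral>\<omega>. ee (real j * X \<omega>) \<partial>M))"
    unfolding G_def using i1 i2 i3 ii prob_space
    by (simp add: integral_add integral_sum)
  finally show ?thesis by (simp add: ch)
qed


lemma cv1: "exp (- 2 * pi * \<i> * of_nat j / of_nat q) = ee (- (real j / real q))"
  unfolding ee_def by (simp add: mult_ac)

lemma cv2: "exp (pi * \<i> * of_nat j / of_nat q) = ee (real j / (2 * real q))"
  unfolding ee_def by (simp add: mult_ac)

lemma cv3: "exp (- pi * \<i> * of_nat j / of_nat q) = ee (- (real j / (2 * real q)))"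
  unfolding ee_def by (simp add: mult_ac)

theorem theorem3:
  fixes M :: "'a measure" and X :: "'a \<Rightarrow> real" and q :: nat
  assumes "prob_space M"
    and "X \<in> borel_measurable M"
    and "q \<ge> 1"
    and "AE \<omega> in M. real q * X \<omega> \<in> \<int>"
    and "integrable M X"
  shows "(complex_of_real (\<integral>\<omega>. real_of_int \<lfloor>X \<omega>\<rfloor> \<partial>M)
           = complex_of_real (\<integral>\<omega>. X \<omega> \<partial>M) - 1/2 + 1 / (2 * of_nat q)
             + (\<Sum>j=1..q-1. char (distr M borel X) (2 * pi * real j)
                  / (of_nat q * (1 - exp (- 2 * pi * \<i> * of_nat j / of_nat q)))))
         \<and> (even q \<longrightarrow> complex_of_real (\<integral>\<omega>. real_of_int (round_nearest (X \<omega>)) \<partial>M)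
           = complex_of_real (\<integral>\<omega>. X \<omega> \<partial>M) + 1 / (2 * of_nat q)
             + (\<Sum>j=1..q-1. (-1) ^ j * char (distr M borel X) (2 * pi * real j)
                  / (of_nat q * (1 - exp (- 2 * pi * \<i> * of_nat j / of_nat q)))))
         \<and> (odd q \<longrightarrow> complex_of_real (\<integral>\<omega>. real_of_int (round_nearest (X \<omega>)) \<partial>M)
           = complex_of_real (\<integral>\<omega>. X \<omega> \<partial>M)
             + (\<Sum>j=1..q-1. (-1) ^ j * char (distr M borel X) (2 * pi * real j)
                  / (of_nat q * (exp (pi * \<i> * of_nat j / of_nat q)
                                 - exp (- pi * \<i> * of_nat j / of_nat q)))))"
proof (intro conjI impI)
  note P = assms(1) and Xm = assms(2) and q1 = assms(3) and Xi = assms(5)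
  note [measurable] = Xm
  have Fm1: "(\<lambda>\<omega>. real_of_int \<lfloor>X \<omega>\<rfloor>) \<in> borel_measurable M" by measurable
  have Fm2: "(\<lambda>\<omega>. real_of_int (round_nearest (X \<omega>))) \<in> borel_measurable M"
    unfolding round_nearest_def by measurable
  let ?ch = "\<lambda>j. char (distr M borel X) (2 * pi * real j)"
  show "complex_of_real (\<integral>\<omega>. real_of_int \<lfloor>X \<omega>\<rfloor> \<partial>M)
           = complex_of_real (\<integral>\<omega>. X \<omega> \<partial>M) - 1/2 + 1 / (2 * of_nat q)
             + (\<Sum>j=1..q-1. ?ch j / (of_nat q * (1 - exp (- 2 * pi * \<i> * of_nat j / of_nat q))))"
  proof -
    have AE1: "AE \<omega> in M. complex_of_real (real_of_int \<lfloor>X \<omega>\<rfloor>) = complex_of_real (X \<omega>) + (1 / (2 * of_nat q) - 1/2)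
      + (\<Sum>j\<in>{1..q-1}. (1 / (of_nat q * (1 - ee (- (real j / real q))))) * ee (real j * X \<omega>))"
      using assms(4) by eventually_elim (rule floor_pt[OF q1])
    have "complex_of_real (\<integral>\<omega>. real_of_int \<lfloor>X \<omega>\<rfloor> \<partial>M) = complex_of_real (\<integral>\<omega>. X \<omega> \<partial>M) + (1 / (2 * of_nat q) - 1/2)
      + (\<Sum>j\<in>{1..q-1}. (1 / (of_nat q * (1 - ee (- (real j / real q))))) * ?ch j)"
      by (rule integ_step[OF P Xm Xi Fm1 _ AE1]) simp
    also have "(\<Sum>j\<in>{1..q-1}. (1 / (of_nat q * (1 - ee (- (real j / real q))))) * ?ch j)
      = (\<Sum>j=1..q-1. ?ch j / (of_nat q * (1 - exp (- 2 * pi * \<i> * of_nat j / of_nat q))))"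
      by (unfold cv1) (rule sum.cong; simp)
    finally show ?thesis by (simp add: algebra_simps)
  qed
  show "complex_of_real (\<integral>\<omega>. real_of_int (round_nearest (X \<omega>)) \<partial>M)
           = complex_of_real (\<integral>\<omega>. X \<omega> \<partial>M) + 1 / (2 * of_nat q)
             + (\<Sum>j=1..q-1. (-1) ^ j * ?ch j / (of_nat q * (1 - exp (- 2 * pi * \<i> * of_nat j / of_nat q))))"
    if ev: "even q"
  proof -
    have AE1: "AE \<omega> in M. complex_of_real (real_of_int (round_nearest (X \<omega>))) = complex_of_real (X \<omega>) + 1 / (2 * of_nat q)
      + (\<Sum>j\<in>{1..q-1}. ((-1) ^ j / (of_nat q * (1 - ee (- (real j / real q))))) * ee (real j * X \<omega>))"
      using assms(4) by eventually_elim (rule round_even_pt[OF q1 ev])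
    have "complex_of_real (\<integral>\<omega>. real_of_int (round_nearest (X \<omega>)) \<partial>M) = complex_of_real (\<integral>\<omega>. X \<omega> \<partial>M) + 1 / (2 * of_nat q)
      + (\<Sum>j\<in>{1..q-1}. ((-1) ^ j / (of_nat q * (1 - ee (- (real j / real q))))) * ?ch j)"
      by (rule integ_step[OF P Xm Xi Fm2 _ AE1]) simp
    also have "(\<Sum>j\<in>{1..q-1}. ((-1) ^ j / (of_nat q * (1 - ee (- (real j / real q))))) * ?ch j)
      = (\<Sum>j=1..q-1. (-1) ^ j * ?ch j / (of_nat q * (1 - exp (- 2 * pi * \<i> * of_nat j / of_nat q))))"
      by (unfold cv1) (rule sum.cong; simp)
    finally show ?thesis .
  qed
  show "complex_of_real (\<integral>\<omega>. real_of_int (round_nearest (X \<omega>)) \<partial>M)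
           = complex_of_real (\<integral>\<omega>. X \<omega> \<partial>M)
             + (\<Sum>j=1..q-1. (-1) ^ j * ?ch j / (of_nat q * (exp (pi * \<i> * of_nat j / of_nat q)
                                 - exp (- pi * \<i> * of_nat j / of_nat q))))"
    if od: "odd q"
  proof -
    have AE1: "AE \<omega> in M. complex_of_real (real_of_int (round_nearest (X \<omega>))) = complex_of_real (X \<omega>) + 0
      + (\<Sum>j\<in>{1..q-1}. ((-1) ^ j / (of_nat q * (ee (real j / (2 * real q)) - ee (- (real j / (2 * real q)))))) * ee (real j * X \<omega>))"
      using assms(4) by eventually_elim (rule round_odd_pt[OF q1 od])
    have "complex_of_real (\<integral>\<omega>. real_of_int (round_nearest (X \<omega>)) \<partial>M) = complex_of_real (\<integral>\<omega>. X \<omega> \<partial>M) + 0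
      + (\<Sum>j\<in>{1..q-1}. ((-1) ^ j / (of_nat q * (ee (real j / (2 * real q)) - ee (- (real j / (2 * real q)))))) * ?ch j)"
      by (rule integ_step[OF P Xm Xi Fm2 _ AE1]) simp
    also have "(\<Sum>j\<in>{1..q-1}. ((-1) ^ j / (of_nat q * (ee (real j / (2 * real q)) - ee (- (real j / (2 * real q)))))) * ?ch j)
      = (\<Sum>j=1..q-1. (-1) ^ j * ?ch j / (of_nat q * (exp (pi * \<i> * of_nat j / of_nat q)
                                 - exp (- pi * \<i> * of_nat j / of_nat q))))"
      by (unfold cv2 cv3) (rule sum.cong; simp)
    finally show ?thesis by simp
  qed
qed

end
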